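(* Let $\mathbb L$ be a non-trivial finite lattice (more than one element). For every constant $D>1$ there exists a constant $D'>1$ such that there is a linear reduction from $\mathsf{Lattice\text{-}Eval}((\{0,1\};\wedge,\vee),D)$ restricted to instances with $\ell=1$ to $\mathsf{Lattice\text{-}Eval}(\mathbb L,D')$.
   Context: For a finite lattice $\mathbb L=(L;\wedge,\vee)$ and a constant $D>1$, $\mathsf{Lattice\text{-}Eval}(\mathbb L,D)$ is the assignment problem whose instances consist of: a circuit $C$ on a variable set $V$ over the basis $\{\wedge,\vee\}$ (fan-in 2) of depth less than $D+D\log_2|V|$; an element $\ell\in L$; and weights $w:V\to[0,1]$ with $\sum_x w(x)=1$. Assignments are maps $f:V\to L$; $f$ is satisfying if $C(f)\ge\ell$. $\mathrm{dist}_{\mathcal I}(f)$ is the minimum over satisfying $g$ of $\sum_{x:f(x)\ne g(x)}w(x)$. A linear reduction from assignment problem $\mathcal P$ to $\mathcal P'$: given an instance $\mathcal I$ of $\mathcal P$ with variable set $V$ and an assignment $f$, it (possibly randomly) produces an instance $\mathcal I'$ of $\mathcal P'$ with variable set $V'$, $|V'|=O(|V|)$, and an assignment $f'$ such that (i) if $f$ satisfies $\mathcal I$ then $f'$ satisfies $\mathcal I'$; (ii) there is a constant $c_1>0$ with: for every $\epsilon\in(0,1)$, if $\mathrm{dist}_{\mathcal I}(f)\ge\epsilon$ then $\Pr[\mathrm{dist}_{\mathcal I'}(f')\ge c_1\epsilon]\ge 9/10$; (iii) every value of $f'$ can be computed with at most a constant $c_2$ queries to $f$. *)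

theory Defs
  imports "HOL-Probability.Probability"
begin

text \<open>Variables are natural numbers (any finite variable set can be renamed into nat).
  A circuit is represented as a formula tree; since only depth (not size) is constrained,
  unfolding a DAG circuit into a tree preserves depth and semantics.\<close>

datatype circ = CVar nat | CAnd circ circ | COr circ circ

fun cvars :: "circ \<Rightarrow> nat set" where
  "cvars (CVar x) = {x}"
| "cvars (CAnd a b) = cvars a \<union> cvars b"
| "cvars (COr a b) = cvars a \<union> cvars b"

fun cdepth :: "circ \<Rightarrow> nat" where
  "cdepth (CVar x) = 0"
| "cdepth (CAnd a b) = Suc (max (cdepth a) (cdepth b))"
| "cdepth (COr a b) = Suc (max (cdepth a) (cdepth b))"

fun ceval :: "circ \<Rightarrow> (nat \<Rightarrow> 'a::lattice) \<Rightarrow> 'a" where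
  "ceval (CVar x) f = f x"
| "ceval (CAnd a b) f = inf (ceval a f) (ceval b f)"
| "ceval (COr a b) f = sup (ceval a f) (ceval b f)"

record 'a inst =
  ivars :: "nat set"
  icirc :: circ
  ilev  :: 'a
  iw    :: "nat \<Rightarrow> real"

definition lattice_eval :: "real \<Rightarrow> ('a::lattice) inst \<Rightarrow> bool" where
  "lattice_eval D I \<longleftrightarrow>
     finite (ivars I) \<and> cvars (icirc I) \<subseteq> ivars I \<and>
     real (cdepth (icirc I)) < D + D * log 2 (real (card (ivars I))) \<and>
     (\<forall>x\<in>ivars I. 0 \<le> iw I x \<and> iw I x \<le> 1) \<and>
     (\<Sum>x\<in>ivars I. iw I x) = 1"

definition sat :: "('a::lattice) inst \<Rightarrow> (nat \<Rightarrow> 'a) \<Rightarrow> bool" where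
  "sat I f \<longleftrightarrow> ilev I \<le> ceval (icirc I) f"

definition dist_inst :: "('a::lattice) inst \<Rightarrow> (nat \<Rightarrow> 'a) \<Rightarrow> real" where
  "dist_inst I f =
     Min ((\<lambda>g. \<Sum>x\<in>{x\<in>ivars I. f x \<noteq> g x}. iw I x) `
          {g. g \<in> ivars I \<rightarrow>\<^sub>E (UNIV :: 'a set) \<and> sat I g})"

text \<open>On input instance I, the reduction samples (from a distribution depending only on I)
  a target instance I', and for every target variable y a query set Q y (at most c2
  variables of I) together with a local decoder F y; the output assignment is
  f' y = F y f, where F y depends only on f restricted to Q y.\<close>
definition linear_reduction ::
  "(('b::lattice) inst \<Rightarrow> bool) \<Rightarrow> (('c::lattice) inst \<Rightarrow> bool) \<Rightarrow> bool" where
  "linear_reduction P P' \<longleftrightarrow>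
    (\<exists>(c0::real) (c1::real) (c2::nat)
      (red :: 'b inst \<Rightarrow> ('c inst \<times> (nat \<Rightarrow> nat set) \<times> (nat \<Rightarrow> (nat \<Rightarrow> 'b) \<Rightarrow> 'c)) pmf).
      c0 > 0 \<and> c1 > 0 \<and>
      (\<forall>I. P I \<longrightarrow>
         (\<forall>(I', Q, F) \<in> set_pmf (red I).
            P' I' \<and>
            real (card (ivars I')) \<le> c0 * real (card (ivars I)) \<and>
            (\<forall>y\<in>ivars I'. Q y \<subseteq> ivars I \<and> card (Q y) \<le> c2 \<and>
               (\<forall>f g. (\<forall>x\<in>Q y. f x = g x) \<longrightarrow> F y f = F y g)) \<and>
            (\<forall>f. sat I f \<longrightarrow> sat I' (\<lambda>y. F y f))) \<and>
         (\<forall>\<epsilon> f. 0 < \<epsilon> \<and> \<epsilon> < 1 \<and> dist_inst I f \<ge> \<epsilon> \<longrightarrow>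
            measure_pmf.prob (red I)
              {(I', Q, F). dist_inst I' (\<lambda>y. F y f) \<ge> c1 * \<epsilon>} \<ge> 9/10)))"

end

theory Submission
  imports Defs
begin

lemma ceval_cong: "(\<And>x. x \<in> cvars C \<Longrightarrow> f x = g x) \<Longrightarrow> ceval C f = ceval C g"
  by (induction C) auto

lemma ceval_emb:
  fixes a b :: "'a::lattice"
  assumes "a \<le> b"
  shows "ceval C (\<lambda>x. if f x then b else a) = (if ceval C f then b else a)"
  using assms by (induction C) (auto simp: inf_absorb1 inf_absorb2 sup_absorb1 sup_absorb2)

lemma ceval_phi:
  fixes p :: "'a::lattice"
  shows "\<not> ceval C g \<le> p \<Longrightarrow> ceval C (\<lambda>x. \<not> g x \<le> p)"
proof (induction C)
  case (CAnd c1 c2)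
  then show ?case by (auto intro: order_trans[OF inf_le1] order_trans[OF inf_le2])
qed auto

theorem mainTheorem14:
  assumes "CARD('a::{finite,lattice}) > 1"
  shows "\<forall>D::real. D > 1 \<longrightarrow> (\<exists>D'::real. D' > 1 \<and>
           linear_reduction (\<lambda>I::bool inst. lattice_eval D I \<and> ilev I = True)
                            (lattice_eval D' :: 'a inst \<Rightarrow> bool))"
proof (intro allI impI)
  fix D :: real assume D: "D > 1"
  obtain a b :: 'a where ab: "a \<noteq> b"
  proof -
    have "\<not> (\<forall>x y::'a. x = y)"
    proof
      assume "\<forall>x y::'a. x = y"
      then have "(UNIV::'a set) \<subseteq> {undefined}" by auto
      then have "CARD('a) \<le> card {undefined::'a}" by (intro card_mono) auto
      then have "CARD('a) \<le> 1" by simp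
      with assms show False by simp
    qed
    then show ?thesis using that by blast
  qed
  define lo where "lo = inf a b"
  define hi where "hi = sup a b"
  have lohi: "lo \<le> hi" unfolding lo_def hi_def by (meson inf_le1 order_trans sup_ge1)
  have nhl: "\<not> hi \<le> lo"
  proof
    assume "hi \<le> lo"
    then have "hi = lo" using lohi by simp
    then have "a = b" unfolding lo_def hi_def
      by (metis antisym inf_le1 inf_le2 sup_ge1 sup_ge2 order_trans)
    with ab show False by simp
  qed
  define e where "e = (\<lambda>t::bool. if t then hi else lo)"
  define tr where "tr = (\<lambda>I::bool inst. (\<lparr>ivars = ivars I, icirc = icirc I, ilev = hi, iw = iw I\<rparr> :: 'a inst))"
  define red where "red = (\<lambda>I::bool inst. return_pmf (tr I, (\<lambda>y::nat. {y}),
       (\<lambda>y (f::nat \<Rightarrow> bool). e (f y))))"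
  have key: "dist_inst I f \<le> dist_inst (tr I) (\<lambda>y. e (f y))"
    if P: "lattice_eval D I" "ilev I = True" for I f
  proof -
    let ?V = "ivars I"
    have fin: "finite ?V" using P unfolding lattice_eval_def by simp
    have cv: "cvars (icirc I) \<subseteq> ?V" using P unfolding lattice_eval_def by simp
    have wnn: "\<And>x. x \<in> ?V \<Longrightarrow> 0 \<le> iw I x" using P unfolding lattice_eval_def by simp
    have trv: "ivars (tr I) = ?V" by (simp add: tr_def)
    let ?S' = "{g. g \<in> ?V \<rightarrow>\<^sub>E (UNIV::'a set) \<and> sat (tr I) g}"
    let ?S = "{g. g \<in> ?V \<rightarrow>\<^sub>E (UNIV::bool set) \<and> sat I g}"
    let ?d' = "\<lambda>g. \<Sum>x\<in>{x\<in>ivars (tr I). e (f x) \<noteq> g x}. iw (tr I) x"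
    let ?d = "\<lambda>g. \<Sum>x\<in>{x\<in>?V. f x \<noteq> g x}. iw I x"
    show ?thesis
    proof (cases "?S' = {}")
      case True
      have "?S = {}"
      proof (rule ccontr)
        assume "?S \<noteq> {}"
        then obtain h where h: "h \<in> ?V \<rightarrow>\<^sub>E UNIV" "sat I h" by blast
        define g where "g = restrict (\<lambda>x. e (h x)) ?V"
        have "g \<in> ?V \<rightarrow>\<^sub>E UNIV" unfolding g_def by simp
        moreover have "sat (tr I) g"
        proof -
          have "ceval (icirc I) g = ceval (icirc I) (\<lambda>x. e (h x))"
            using cv by (intro ceval_cong) (auto simp: g_def)
          also have "\<dots> = e (ceval (icirc I) h)" unfolding e_def using ceval_emb[OF lohi] .
          finally show ?thesis using h(2) P(2) unfolding sat_def tr_def e_def by simp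
        qed
        ultimately show False using True by blast
      qed
      moreover have "?S' = {g. g \<in> ivars (tr I) \<rightarrow>\<^sub>E (UNIV::'a set) \<and> sat (tr I) g}" by (simp add: tr_def)
      ultimately have e2: "{g. g \<in> ivars (tr I) \<rightarrow>\<^sub>E (UNIV::'a set) \<and> sat (tr I) g} = {}" using True by simp
      show ?thesis unfolding dist_inst_def e2 \<open>?S = {}\<close> by simp
    next
      case False
      have finS': "finite ?S'"
        by (rule finite_subset[of _ "?V \<rightarrow>\<^sub>E (UNIV::'a set)"]) (auto intro: finite_PiE fin)
      have "dist_inst (tr I) (\<lambda>y. e (f y)) \<in> ?d' ` ?S'"
        unfolding dist_inst_def trv using False finS' by (intro Min_in) auto
      then obtain g where g: "g \<in> ?V \<rightarrow>\<^sub>E UNIV" "sat (tr I) g"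
        and gd: "dist_inst (tr I) (\<lambda>y. e (f y)) = ?d' g" by auto
      define h where "h = restrict (\<lambda>x. \<not> g x \<le> lo) ?V"
      have hS: "h \<in> ?S"
      proof -
        have "hi \<le> ceval (icirc I) g" using g(2) unfolding sat_def tr_def by simp
        then have "\<not> ceval (icirc I) g \<le> lo" using nhl order_trans by blast
        then have "ceval (icirc I) (\<lambda>x. \<not> g x \<le> lo)" by (rule ceval_phi)
        moreover have "ceval (icirc I) h = ceval (icirc I) (\<lambda>x. \<not> g x \<le> lo)"
          using cv by (intro ceval_cong) (auto simp: h_def)
        ultimately show ?thesis using P(2) unfolding sat_def h_def by simp
      qed
      have finS: "finite ?S"
        by (rule finite_subset[of _ "?V \<rightarrow>\<^sub>E (UNIV::bool set)"]) (auto intro: finite_PiE fin)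
      have "dist_inst I f \<le> ?d h"
        unfolding dist_inst_def using hS finS by (intro Min_le) auto
      also have "\<dots> \<le> ?d' g"
      proof -
        have sub: "{x\<in>?V. f x \<noteq> h x} \<subseteq> {x\<in>?V. e (f x) \<noteq> g x}"
          using lohi nhl by (auto simp: h_def e_def)
        have "?d h \<le> (\<Sum>x\<in>{x\<in>?V. e (f x) \<noteq> g x}. iw I x)"
          by (rule sum_mono2) (use fin sub wnn in auto)
        then show ?thesis by (simp add: tr_def)
      qed
      finally show ?thesis using gd by simp
    qed
  qed
  show "\<exists>D'::real. D' > 1 \<and>
           linear_reduction (\<lambda>I::bool inst. lattice_eval D I \<and> ilev I = True)
                            (lattice_eval D' :: 'a inst \<Rightarrow> bool)"
  proof (intro exI conjI)
    show "D > 1" by (rule D)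
    show "linear_reduction (\<lambda>I::bool inst. lattice_eval D I \<and> ilev I = True)
                            (lattice_eval D :: 'a inst \<Rightarrow> bool)"
      unfolding linear_reduction_def
    proof (intro exI[of _ 1] exI[of _ 1] exI[of _ "1::nat"] exI[of _ red], intro conjI allI impI)
      show "(0::real) < 1" by simp
      show "(0::real) < 1" by simp
      fix I :: "bool inst" assume P: "lattice_eval D I \<and> ilev I = True"
      show "\<forall>(I', Q, F) \<in> set_pmf (red I).
            lattice_eval D I' \<and>
            real (card (ivars I')) \<le> 1 * real (card (ivars I)) \<and>
            (\<forall>y\<in>ivars I'. Q y \<subseteq> ivars I \<and> card (Q y) \<le> 1 \<and>
               (\<forall>f g. (\<forall>x\<in>Q y. f x = g x) \<longrightarrow> F y f = F y g)) \<and>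
            (\<forall>f. sat I f \<longrightarrow> sat I' (\<lambda>y. F y f))"
      proof -
        have "lattice_eval D (tr I)" using P unfolding lattice_eval_def tr_def by simp
        moreover have "\<forall>f. sat I f \<longrightarrow> sat (tr I) (\<lambda>y. e (f y))"
          using P ceval_emb[OF lohi] unfolding sat_def tr_def e_def by simp
        ultimately show ?thesis unfolding red_def by (simp add: tr_def)
      qed
      fix \<epsilon> and f :: "nat \<Rightarrow> bool"
      assume h: "0 < \<epsilon> \<and> \<epsilon> < 1 \<and> dist_inst I f \<ge> \<epsilon>"
      show "measure_pmf.prob (red I)
              {(I', Q, F). dist_inst I' (\<lambda>y. F y f) \<ge> 1 * \<epsilon>} \<ge> 9/10"
        using key[of I f] P h unfolding red_def by (force simp: measure_return split: split_indicator intro: order_trans)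
    qed
  qed
qed

end
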